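(* Suppose $\max_{0\le j\le p}|f_j(\bm X)|\le C_0$ a.s. and $|S_{\bar\gamma}|\lambda_0\le\zeta_0$. Suppose the event $$D^\dagger_{\rm CAL}(\hat\gamma^\top\bm F,\bar\gamma^\top\bm F)+(A_0-1)\lambda_0\|\hat\gamma-\bar\gamma\|_1\le M_0|S_{\bar\gamma}|\lambda_0^2$$ holds for constants $A_0>1$ and $M_0>0$. Then $$\tilde{\mathbb E}[Rw(\bm X;\bar\gamma)\{(\hat\gamma-\bar\gamma)^\top\bm F\}^2]\le\exp(\eta_{01})M_0|S_{\bar\gamma}|\lambda_0^2,\qquad\eta_{01}=(A_0-1)^{-1}M_0C_0\zeta_0.$$
   Context: $\tilde{\mathbb E}$ denotes the sample mean over i.i.d. observations $(\bm X_i,R_i)$, $i=1,\dots,N$, with $R_i\in\{0,1\}$. $\bm F=(f_0(\bm X),\dots,f_p(\bm X))^\top$, and $w(\bm X;\gamma)=\exp(-\gamma^\top\bm F)$. $\hat\gamma,\bar\gamma\in\mathbb R^{p+1}$ are arbitrary vectors. $S_{\bar\gamma}=\{0\}\cup\{j\ge1:\bar\gamma_j\neq0\}$, and $\lambda_0>0$, $\zeta_0>0$. $D^\dagger_{\rm CAL}(\hat\gamma^\top\bm F,\bar\gamma^\top\bm F)=-\tilde{\mathbb E}[R\{\exp(-\hat\gamma^\top\bm F)-\exp(-\bar\gamma^\top\bm F)\}(\hat\gamma-\bar\gamma)^\top\bm F]$, which is nonnegative. *)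

theory Defs
  imports Complex_Main
begin

definition sample_mean :: "nat \<Rightarrow> (nat \<Rightarrow> real) \<Rightarrow> real" where
  "sample_mean N g = (\<Sum>i<N. g i) / real N"

definition linpred :: "nat \<Rightarrow> (nat \<Rightarrow> 'x \<Rightarrow> real) \<Rightarrow> (nat \<Rightarrow> real) \<Rightarrow> 'x \<Rightarrow> real" where
  "linpred p f g x = (\<Sum>j\<le>p. g j * f j x)"

definition weight :: "nat \<Rightarrow> (nat \<Rightarrow> 'x \<Rightarrow> real) \<Rightarrow> (nat \<Rightarrow> real) \<Rightarrow> 'x \<Rightarrow> real" where
  "weight p f g x = exp (- linpred p f g x)"

definition support_set :: "nat \<Rightarrow> (nat \<Rightarrow> real) \<Rightarrow> nat set" where
  "support_set p g = {0} \<union> {j \<in> {1..p}. g j \<noteq> 0}"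

definition l1_dist :: "nat \<Rightarrow> (nat \<Rightarrow> real) \<Rightarrow> (nat \<Rightarrow> real) \<Rightarrow> real" where
  "l1_dist p a b = (\<Sum>j\<le>p. \<bar>a j - b j\<bar>)"

definition D_CAL :: "nat \<Rightarrow> (nat \<Rightarrow> 'x) \<Rightarrow> (nat \<Rightarrow> real) \<Rightarrow> nat \<Rightarrow> (nat \<Rightarrow> 'x \<Rightarrow> real)
    \<Rightarrow> (nat \<Rightarrow> real) \<Rightarrow> (nat \<Rightarrow> real) \<Rightarrow> real" where
  "D_CAL N X R p f gh gb = - sample_mean N (\<lambda>i. R i *
      (exp (- linpred p f gh (X i)) - exp (- linpred p f gb (X i))) *
      linpred p f (\<lambda>j. gh j - gb j) (X i))"

end

theory Submission
  imports Defs
begin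

lemma key_ineq:
  fixes h :: real
  shows "exp (- \<bar>h\<bar>) * h^2 \<le> (1 - exp (- h)) * h"
proof (cases "h \<ge> 0")
  case True
  have "1 + h \<le> exp h" by (rule exp_ge_add_one_self)
  hence "(1 + h) * exp (-h) \<le> exp h * exp (-h)" by (simp add: mult_right_mono)
  hence "(1 + h) * exp (-h) \<le> 1" by (simp add: exp_minus_inverse)
  hence "exp (-h) * h \<le> 1 - exp (-h)" by (simp add: algebra_simps)
  hence "exp (-h) * h * h \<le> (1 - exp (-h)) * h" using True by (simp add: mult_right_mono)
  thus ?thesis using True by (simp add: power2_eq_square mult.assoc)
next
  case False
  define t where "t = - h"
  have t: "t > 0" using False t_def by simp
  have "t + 1 \<le> exp t" using exp_ge_add_one_self[of t] by linarith
  moreover have "exp (-t) \<le> 1" using t by simp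
  hence "exp (-t) * t \<le> t" using t by (simp add: mult_left_le_one_le mult.commute)
  ultimately have "exp (-t) * t \<le> exp t - 1" by linarith
  hence "exp (-t) * t * t \<le> (exp t - 1) * t" using t by (simp add: mult_right_mono)
  thus ?thesis using t by (simp add: t_def power2_eq_square algebra_simps)
qed

lemma key_ineq2:
  fixes h eta :: real
  assumes "\<bar>h\<bar> \<le> eta"
  shows "h^2 \<le> exp eta * ((1 - exp (- h)) * h)"
proof -
  have "h^2 = exp \<bar>h\<bar> * (exp (- \<bar>h\<bar>) * h^2)" by (simp add: exp_minus_inverse)
  also have "\<dots> \<le> exp \<bar>h\<bar> * ((1 - exp (- h)) * h)"
    by (rule mult_left_mono[OF key_ineq]) simp
  also have "\<dots> \<le> exp eta * ((1 - exp (- h)) * h)"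
  proof (rule mult_right_mono)
    show "exp \<bar>h\<bar> \<le> exp eta" using assms by simp
    show "0 \<le> (1 - exp (- h)) * h"
      using order_trans[OF _ key_ineq[of h]] by simp
  qed
  finally show ?thesis .
qed

lemma linpred_add:
  "linpred p f gh x = linpred p f gb x + linpred p f (\<lambda>j. gh j - gb j) x"
  unfolding linpred_def by (simp add: sum.distrib[symmetric] algebra_simps)

theorem lemmaS9:
  fixes N p :: nat and X :: "nat \<Rightarrow> 'x" and R :: "nat \<Rightarrow> real"
    and f :: "nat \<Rightarrow> 'x \<Rightarrow> real" and gh gb :: "nat \<Rightarrow> real"
    and C0 lambda0 zeta0 A0 M0 :: real
  assumes R01: "\<forall>i<N. R i \<in> {0, 1}"
    and bdd: "\<forall>i<N. \<forall>j\<le>p. \<bar>f j (X i)\<bar> \<le> C0"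
    and lam: "lambda0 > 0" and zeta: "zeta0 > 0"
    and sparse: "real (card (support_set p gb)) * lambda0 \<le> zeta0"
    and A0: "A0 > 1" and M0: "M0 > 0"
    and event: "D_CAL N X R p f gh gb + (A0 - 1) * lambda0 * l1_dist p gh gb
                 \<le> M0 * real (card (support_set p gb)) * lambda0 ^ 2"
  shows "sample_mean N (\<lambda>i. R i * weight p f gb (X i) * (linpred p f (\<lambda>j. gh j - gb j) (X i))^2)
           \<le> exp (M0 * C0 * zeta0 / (A0 - 1)) * M0 * real (card (support_set p gb)) * lambda0 ^ 2"
proof -
  define S where "S = real (card (support_set p gb))"
  define eta where "eta = M0 * C0 * zeta0 / (A0 - 1)"
  define h where "h i = linpred p f (\<lambda>j. gh j - gb j) (X i)" for i
  define a where "a i = linpred p f gb (X i)" for i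
  define T where "T i = R i * exp (- a i) * ((1 - exp (- h i)) * h i)" for i
  have Rnn: "\<And>i. i < N \<Longrightarrow> R i \<ge> 0" using R01 by auto
  have Tnn: "T i \<ge> 0" if i: "i < N" for i
  proof -
    have "0 \<le> (1 - exp (- h i)) * h i" using order_trans[OF _ key_ineq[of "h i"]] by simp
    thus ?thesis unfolding T_def using Rnn[OF i] by simp
  qed
  have Deq: "D_CAL N X R p f gh gb = sample_mean N T"
  proof -
    have "\<And>i. - (R i * (exp (- linpred p f gh (X i)) - exp (- linpred p f gb (X i))) *
      linpred p f (\<lambda>j. gh j - gb j) (X i)) = T i"
      unfolding T_def h_def a_def
      by (subst linpred_add[of p f gh _ gb]) (simp add: exp_add exp_diff exp_minus field_simps)
    hence "(\<Sum>i<N. T i) = - (\<Sum>i<N. R i * (exp (- linpred p f gh (X i)) - exp (- linpred p f gb (X i))) *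
      linpred p f (\<lambda>j. gh j - gb j) (X i))"
      by (simp add: sum_negf[symmetric])
    thus ?thesis unfolding D_CAL_def sample_mean_def by simp
  qed
  have Dnn: "sample_mean N T \<ge> 0"
    unfolding sample_mean_def using Tnn by (intro divide_nonneg_nonneg sum_nonneg) auto
  have l1nn: "l1_dist p gh gb \<ge> 0" unfolding l1_dist_def by (simp add: sum_nonneg)
  have ev: "sample_mean N T + (A0 - 1) * lambda0 * l1_dist p gh gb \<le> M0 * S * lambda0 ^ 2"
    using event Deq S_def by simp
  have hb: "\<bar>h i\<bar> \<le> eta" if i: "i < N" for i
  proof -
    have "(A0 - 1) * lambda0 * l1_dist p gh gb \<le> M0 * S * lambda0 ^ 2" using ev Dnn by linarith
    moreover have "(A0 - 1) * (M0 * S * lambda0 / (A0 - 1) * lambda0) = M0 * S * lambda0 ^ 2"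
      using A0 by (simp add: power2_eq_square)
    ultimately have "(A0 - 1) * (lambda0 * l1_dist p gh gb) \<le> (A0 - 1) * (M0 * S * lambda0 / (A0 - 1) * lambda0)"
      by (simp add: mult.assoc)
    hence "lambda0 * l1_dist p gh gb \<le> M0 * S * lambda0 / (A0 - 1) * lambda0"
      by (rule mult_left_le_imp_le) (use A0 in simp)
    hence "lambda0 * l1_dist p gh gb \<le> lambda0 * (M0 * S * lambda0 / (A0 - 1))"
      by (simp add: mult.commute)
    hence L: "l1_dist p gh gb \<le> M0 * S * lambda0 / (A0 - 1)"
      by (rule mult_left_le_imp_le) (use lam in simp)
    have "M0 * (S * lambda0) \<le> M0 * zeta0" using sparse M0 S_def by simp
    hence L2: "M0 * S * lambda0 / (A0 - 1) \<le> M0 * zeta0 / (A0 - 1)"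
      using A0 by (simp add: divide_right_mono mult.assoc)
    have C0: "C0 \<ge> 0" using bdd i by (meson abs_ge_zero order_trans le0)
    have "\<bar>h i\<bar> \<le> (\<Sum>j\<le>p. \<bar>(gh j - gb j) * f j (X i)\<bar>)"
      unfolding h_def linpred_def by (rule sum_abs)
    also have "\<dots> \<le> (\<Sum>j\<le>p. \<bar>gh j - gb j\<bar> * C0)"
      by (rule sum_mono) (use bdd i in \<open>auto simp: abs_mult intro: mult_left_mono\<close>)
    also have "\<dots> = C0 * l1_dist p gh gb" unfolding l1_dist_def
      by (simp add: sum_distrib_left mult.commute)
    also have "\<dots> \<le> C0 * (M0 * zeta0 / (A0 - 1))"
      using L L2 C0 by (intro mult_left_mono) linarith+
    also have "\<dots> = eta" unfolding eta_def by simp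
    finally show ?thesis .
  qed
  have "sample_mean N (\<lambda>i. R i * weight p f gb (X i) * (h i)^2) \<le> sample_mean N (\<lambda>i. exp eta * T i)"
    unfolding sample_mean_def
  proof (rule divide_right_mono)
    show "(\<Sum>i<N. R i * weight p f gb (X i) * (h i)\<^sup>2) \<le> (\<Sum>i<N. exp eta * T i)"
    proof (rule sum_mono)
      fix i assume "i \<in> {..<N}"
      hence i: "i < N" by simp
      have "R i * exp (- a i) \<ge> 0" using Rnn[OF i] by simp
      hence "R i * exp (- a i) * (h i)^2 \<le> R i * exp (- a i) * (exp eta * ((1 - exp (- h i)) * h i))"
        using key_ineq2[OF hb[OF i]] by (rule mult_left_mono[rotated])
      thus "R i * weight p f gb (X i) * (h i)\<^sup>2 \<le> exp eta * T i"
        unfolding T_def weight_def a_def by (simp add: algebra_simps)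
    qed
  qed simp
  also have "\<dots> = exp eta * sample_mean N T"
    unfolding sample_mean_def by (simp add: sum_distrib_left)
  also have "\<dots> \<le> exp eta * (M0 * S * lambda0 ^ 2)"
    using ev l1nn A0 lam by (intro mult_left_mono) (simp_all add: add_increasing2, smt (verit) mult_nonneg_nonneg)
  finally show ?thesis unfolding h_def eta_def S_def by (simp add: mult.assoc)
qed

end
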